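(* Let $\varphi : X \to Y$ be a morphism in $\mathscr{C}$ with kernel $\kappa : K\to X$. Then $\varphi$ is $\{1,3\}$-invertible if and only if $\varphi$ is regular and $\kappa\kappa^{*} : K\to K$ is invertible. In this case, for every $\psi : Y\to X$ with $\varphi\psi\varphi=\varphi$, $$\psi\,[1_X-\kappa^{*}(\kappa\kappa^{*})^{-1}\kappa]$$ is a $\{1,3\}$-inverse of $\varphi$.
   Context: $\mathscr{C}$ is an additive category with an involution $*$: a map on morphisms sending $\varphi : X\to Y$ to $\varphi^* : Y \to X$ such that $(\varphi^* )^*=\varphi$, $(\varphi\psi)^*=\psi^*\varphi^*$ and $(\varphi+\phi)^*=\varphi^*+\phi^*$. Composition is written left to right: for $\varphi : X\to Y$ and $\psi : Y\to Z$, $\varphi\psi : X \to Z$ means "first $\varphi$, then $\psi$". A kernel of $\varphi : X\to Y$ is a morphism $\kappa : K\to X$ with $\kappa\varphi=0$ such that every $\alpha : M\to X$ with $\alpha\varphi=0$ factors uniquely as $\alpha=\alpha'\kappa$. $\varphi$ is regular if there is $\chi : Y\to X$ with $\varphi\chi\varphi=\varphi$. A $\{1,3\}$-inverse of $\varphi$ is a morphism $\chi : Y\to X$ with $\varphi\chi\varphi=\varphi$ and $(\varphi\chi)^*=\varphi\chi$. A morphism is invertible if it has a two-sided inverse. *)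

theory Defs
  imports Main
begin

text \<open>An additive category with involution, given explicitly by hom-sets.
  Composition cmp is written diagrammatically: cmp f g = "first f, then g".\<close>

locale additive_inv_cat =
  fixes hom :: "'o \<Rightarrow> 'o \<Rightarrow> 'm set"
    and cmp :: "'m \<Rightarrow> 'm \<Rightarrow> 'm"
    and idm :: "'o \<Rightarrow> 'm"
    and zer :: "'o \<Rightarrow> 'o \<Rightarrow> 'm"
    and add :: "'m \<Rightarrow> 'm \<Rightarrow> 'm"
    and neg :: "'m \<Rightarrow> 'm"
    and star :: "'m \<Rightarrow> 'm"
  assumes hom_disjoint: "\<And>f X Y X' Y'. f \<in> hom X Y \<Longrightarrow> f \<in> hom X' Y' \<Longrightarrow> X = X' \<and> Y = Y'"
    and cmp_closed: "\<And>f g X Y Z. f \<in> hom X Y \<Longrightarrow> g \<in> hom Y Z \<Longrightarrow> cmp f g \<in> hom X Z"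
    and cmp_assoc: "\<And>f g h W X Y Z. f \<in> hom W X \<Longrightarrow> g \<in> hom X Y \<Longrightarrow> h \<in> hom Y Z \<Longrightarrow>
                     cmp (cmp f g) h = cmp f (cmp g h)"
    and idm_closed: "\<And>X. idm X \<in> hom X X"
    and idm_left: "\<And>f X Y. f \<in> hom X Y \<Longrightarrow> cmp (idm X) f = f"
    and idm_right: "\<And>f X Y. f \<in> hom X Y \<Longrightarrow> cmp f (idm Y) = f"
    and zer_closed: "\<And>X Y. zer X Y \<in> hom X Y"
    and add_closed: "\<And>f g X Y. f \<in> hom X Y \<Longrightarrow> g \<in> hom X Y \<Longrightarrow> add f g \<in> hom X Y"
    and neg_closed: "\<And>f X Y. f \<in> hom X Y \<Longrightarrow> neg f \<in> hom X Y"
    and add_assoc: "\<And>f g h X Y. f \<in> hom X Y \<Longrightarrow> g \<in> hom X Y \<Longrightarrow> h \<in> hom X Y \<Longrightarrow>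
                     add (add f g) h = add f (add g h)"
    and add_comm: "\<And>f g X Y. f \<in> hom X Y \<Longrightarrow> g \<in> hom X Y \<Longrightarrow> add f g = add g f"
    and add_zer: "\<And>f X Y. f \<in> hom X Y \<Longrightarrow> add f (zer X Y) = f"
    and add_neg: "\<And>f X Y. f \<in> hom X Y \<Longrightarrow> add f (neg f) = zer X Y"
    and cmp_add_left: "\<And>f g h X Y Z. f \<in> hom X Y \<Longrightarrow> g \<in> hom X Y \<Longrightarrow> h \<in> hom Y Z \<Longrightarrow>
                     cmp (add f g) h = add (cmp f h) (cmp g h)"
    and cmp_add_right: "\<And>f g h X Y Z. f \<in> hom X Y \<Longrightarrow> g \<in> hom Y Z \<Longrightarrow> h \<in> hom Y Z \<Longrightarrow>
                     cmp f (add g h) = add (cmp f g) (cmp f h)"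
    and zero_object: "\<exists>Z. \<forall>X. hom Z X = {zer Z X} \<and> hom X Z = {zer X Z}"
    and biproducts: "\<And>X Y. \<exists>S i1 i2 p1 p2. i1 \<in> hom X S \<and> i2 \<in> hom Y S \<and> p1 \<in> hom S X \<and> p2 \<in> hom S Y
                     \<and> cmp i1 p1 = idm X \<and> cmp i2 p2 = idm Y \<and> cmp i1 p2 = zer X Y \<and> cmp i2 p1 = zer Y X
                     \<and> add (cmp p1 i1) (cmp p2 i2) = idm S"
    and inv_closed: "\<And>f X Y. f \<in> hom X Y \<Longrightarrow> star f \<in> hom Y X"
    and inv_inv: "\<And>f X Y. f \<in> hom X Y \<Longrightarrow> star (star f) = f"
    and inv_cmp: "\<And>f g X Y Z. f \<in> hom X Y \<Longrightarrow> g \<in> hom Y Z \<Longrightarrow> star (cmp f g) = cmp (star g) (star f)"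
    and inv_add: "\<And>f g X Y. f \<in> hom X Y \<Longrightarrow> g \<in> hom X Y \<Longrightarrow> star (add f g) = add (star f) (star g)"

definition is_kernel ::
  "('o \<Rightarrow> 'o \<Rightarrow> 'm set) \<Rightarrow> ('m \<Rightarrow> 'm \<Rightarrow> 'm) \<Rightarrow> ('o \<Rightarrow> 'o \<Rightarrow> 'm) \<Rightarrow> 'm \<Rightarrow> 'o \<Rightarrow> 'o \<Rightarrow> 'm \<Rightarrow> 'o \<Rightarrow> bool"
  where "is_kernel hom cmp zer phi X Y kappa K \<longleftrightarrow>
     kappa \<in> hom K X \<and> cmp kappa phi = zer K Y \<and>
     (\<forall>M alpha. alpha \<in> hom M X \<and> cmp alpha phi = zer M Y \<longrightarrow>
        (\<exists>!alpha'. alpha' \<in> hom M K \<and> alpha = cmp alpha' kappa))"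

definition regular_mor ::
  "('o \<Rightarrow> 'o \<Rightarrow> 'm set) \<Rightarrow> ('m \<Rightarrow> 'm \<Rightarrow> 'm) \<Rightarrow> 'm \<Rightarrow> 'o \<Rightarrow> 'o \<Rightarrow> bool"
  where "regular_mor hom cmp phi X Y \<longleftrightarrow> (\<exists>chi \<in> hom Y X. cmp (cmp phi chi) phi = phi)"

definition inverse13 ::
  "('o \<Rightarrow> 'o \<Rightarrow> 'm set) \<Rightarrow> ('m \<Rightarrow> 'm \<Rightarrow> 'm) \<Rightarrow> ('m \<Rightarrow> 'm) \<Rightarrow> 'm \<Rightarrow> 'o \<Rightarrow> 'o \<Rightarrow> 'm \<Rightarrow> bool"
  where "inverse13 hom cmp star phi X Y chi \<longleftrightarrow>
     chi \<in> hom Y X \<and> cmp (cmp phi chi) phi = phi \<and> star (cmp phi chi) = cmp phi chi"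

definition invertible_mor ::
  "('o \<Rightarrow> 'o \<Rightarrow> 'm set) \<Rightarrow> ('m \<Rightarrow> 'm \<Rightarrow> 'm) \<Rightarrow> ('o \<Rightarrow> 'm) \<Rightarrow> 'm \<Rightarrow> 'o \<Rightarrow> 'o \<Rightarrow> bool"
  where "invertible_mor hom cmp idm f X Y \<longleftrightarrow>
     (\<exists>g \<in> hom Y X. cmp f g = idm X \<and> cmp g f = idm Y)"

end

theory Submission imports Defs begin
context additive_inv_cat begin
lemma add_zer_l: "f \<in> hom X Y \<Longrightarrow> add (zer X Y) f = f"
  using add_comm[OF zer_closed, of f X Y] add_zer[of f X Y] by simp
lemma cancel_l: assumes a: "a \<in> hom X Y" and b: "b \<in> hom X Y" and c: "c \<in> hom X Y" and e: "add a b = add a c" shows "b = c"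
proof -
  have na: "neg a \<in> hom X Y" using neg_closed[OF a] .
  have z: "add (neg a) a = zer X Y" using add_comm[OF na a] add_neg[OF a] by simp
  have "b = add (add (neg a) a) b" using z add_zer_l[OF b] by simp
  also have "\<dots> = add (neg a) (add a b)" using add_assoc[OF na a b] .
  also have "\<dots> = add (neg a) (add a c)" using e by simp
  also have "\<dots> = add (add (neg a) a) c" using add_assoc[OF na a c] by simp
  also have "\<dots> = c" using z add_zer_l[OF c] by simp
  finally show ?thesis .
qed
lemma diff_zero: assumes a: "a \<in> hom X Y" and b: "b \<in> hom X Y" and e: "add a (neg b) = zer X Y" shows "a = b"
proof -
  have nb: "neg b \<in> hom X Y" using neg_closed[OF b] .
  have "add (neg b) a = add (neg b) b"
    using add_comm[OF nb a] add_comm[OF nb b] e add_neg[OF b] by simp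
  thus ?thesis using cancel_l[OF nb a b] by simp
qed
lemma cmp_zer_r: assumes f: "f \<in> hom X Y" shows "cmp f (zer Y Z) = zer X Z"
proof -
  have c: "cmp f (zer Y Z) \<in> hom X Z" using cmp_closed[OF f zer_closed] .
  have "add (cmp f (zer Y Z)) (cmp f (zer Y Z)) = cmp f (add (zer Y Z) (zer Y Z))"
    using cmp_add_right[OF f zer_closed zer_closed] by simp
  also have "\<dots> = add (cmp f (zer Y Z)) (zer X Z)" using add_zer[OF zer_closed] add_zer[OF c] by simp
  finally show ?thesis using cancel_l[OF c c zer_closed] by simp
qed
lemma cmp_zer_l: assumes f: "f \<in> hom Y Z" shows "cmp (zer X Y) f = zer X Z"
proof -
  have c: "cmp (zer X Y) f \<in> hom X Z" using cmp_closed[OF zer_closed f] .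
  have "add (cmp (zer X Y) f) (cmp (zer X Y) f) = cmp (add (zer X Y) (zer X Y)) f"
    using cmp_add_left[OF zer_closed zer_closed f] by simp
  also have "\<dots> = add (cmp (zer X Y) f) (zer X Z)" using add_zer[OF zer_closed] add_zer[OF c] by simp
  finally show ?thesis using cancel_l[OF c c zer_closed] by simp
qed
lemma star_zer: "star (zer X Y) = zer Y X"
proof -
  have c: "star (zer X Y) \<in> hom Y X" using inv_closed[OF zer_closed] .
  have "add (star (zer X Y)) (star (zer X Y)) = star (add (zer X Y) (zer X Y))"
    using inv_add[OF zer_closed zer_closed] by simp
  also have "\<dots> = add (star (zer X Y)) (zer Y X)" using add_zer[OF zer_closed] add_zer[OF c] by simp
  finally show ?thesis using cancel_l[OF c c zer_closed] by simp
qed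
lemma neg_zer: "neg (zer X Y) = zer X Y"
  using add_zer_l[OF neg_closed[OF zer_closed]] add_neg[OF zer_closed, of X Y] by simp
lemma cmp_neg_r: assumes f: "f \<in> hom X Y" and g: "g \<in> hom Y Z" shows "cmp f (neg g) = neg (cmp f g)"
proof -
  have fg: "cmp f g \<in> hom X Z" using cmp_closed[OF f g] .
  have c: "cmp f (neg g) \<in> hom X Z" using cmp_closed[OF f neg_closed[OF g]] .
  have "add (cmp f g) (cmp f (neg g)) = cmp f (add g (neg g))"
    using cmp_add_right[OF f g neg_closed[OF g]] by simp
  also have "\<dots> = add (cmp f g) (neg (cmp f g))" using add_neg[OF g] add_neg[OF fg] cmp_zer_r[OF f] by simp
  finally show ?thesis using cancel_l[OF fg c neg_closed[OF fg]] by simp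
qed
lemma cmp_neg_l: assumes f: "f \<in> hom X Y" and g: "g \<in> hom Y Z" shows "cmp (neg f) g = neg (cmp f g)"
proof -
  have fg: "cmp f g \<in> hom X Z" using cmp_closed[OF f g] .
  have c: "cmp (neg f) g \<in> hom X Z" using cmp_closed[OF neg_closed[OF f] g] .
  have "add (cmp f g) (cmp (neg f) g) = cmp (add f (neg f)) g"
    using cmp_add_left[OF f neg_closed[OF f] g] by simp
  also have "\<dots> = add (cmp f g) (neg (cmp f g))" using add_neg[OF f] add_neg[OF fg] cmp_zer_l[OF g] by simp
  finally show ?thesis using cancel_l[OF fg c neg_closed[OF fg]] by simp
qed
lemma star_neg: assumes f: "f \<in> hom X Y" shows "star (neg f) = neg (star f)"
proof -
  have sf: "star f \<in> hom Y X" using inv_closed[OF f] .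
  have c: "star (neg f) \<in> hom Y X" using inv_closed[OF neg_closed[OF f]] .
  have "add (star f) (star (neg f)) = star (add f (neg f))"
    using inv_add[OF f neg_closed[OF f]] by simp
  also have "\<dots> = add (star f) (neg (star f))" using add_neg[OF f] add_neg[OF sf] star_zer by simp
  finally show ?thesis using cancel_l[OF sf c neg_closed[OF sf]] by simp
qed
lemma star_idm: "star (idm X) = idm X"
proof -
  have s: "star (idm X) \<in> hom X X" using inv_closed[OF idm_closed] .
  have "star (cmp (idm X) (star (idm X))) = cmp (star (star (idm X))) (star (idm X))"
    using inv_cmp[OF idm_closed s] .
  hence "star (star (idm X)) = cmp (idm X) (star (idm X))"
    using idm_left[OF s] inv_inv[OF idm_closed] by simp
  thus ?thesis using idm_left[OF s] inv_inv[OF idm_closed] by simp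
qed
lemma ker_factor: assumes "is_kernel hom cmp zer phi X Y k K" "a \<in> hom M X" "cmp a phi = zer M Y"
  shows "\<exists>r. r \<in> hom M K \<and> a = cmp r k"
  using assms unfolding is_kernel_def by blast
lemma ker_mono: assumes ker: "is_kernel hom cmp zer phi X Y k K" and phi: "phi \<in> hom X Y"
  and a: "a \<in> hom M K" and b: "b \<in> hom M K" and e: "cmp a k = cmp b k" shows "a = b"
proof -
  have k: "k \<in> hom K X" "cmp k phi = zer K Y" using ker unfolding is_kernel_def by auto
  have "cmp (cmp a k) phi = cmp a (cmp k phi)" using cmp_assoc[OF a k(1) phi] .
  hence z: "cmp (cmp a k) phi = zer M Y" using k(2) cmp_zer_r[OF a] by simp
  have ak: "cmp a k \<in> hom M X" using cmp_closed[OF a k(1)] .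
  have "\<exists>!a'. a' \<in> hom M K \<and> cmp a k = cmp a' k" using ker ak z unfolding is_kernel_def by blast
  thus ?thesis using a b e by blast
qed

lemma construct:
  assumes phi: "phi \<in> hom X Y" and ker: "is_kernel hom cmp zer phi X Y k K"
    and psi: "psi \<in> hom Y X" "cmp (cmp phi psi) phi = phi"
    and g: "g \<in> hom K K" "cmp (cmp k (star k)) g = idm K" "cmp g (cmp k (star k)) = idm K"
  shows "inverse13 hom cmp star phi X Y (cmp psi (add (idm X) (neg (cmp (cmp (star k) g) k))))"
proof -
  have k: "k \<in> hom K X" "cmp k phi = zer K Y" using ker unfolding is_kernel_def by auto
  have ks: "star k \<in> hom X K" using inv_closed[OF k(1)] .
  have ksg: "cmp (star k) g \<in> hom X K" using cmp_closed[OF ks g(1)] .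
  define P where "P = cmp (cmp (star k) g) k"
  have P: "P \<in> hom X X" unfolding P_def using cmp_closed[OF ksg k(1)] .
  have nP: "neg P \<in> hom X X" using neg_closed[OF P] .
  define Q where "Q = add (idm X) (neg P)"
  have Q: "Q \<in> hom X X" unfolding Q_def using add_closed[OF idm_closed nP] .
  have "cmp P phi = cmp (cmp (star k) g) (cmp k phi)" unfolding P_def using cmp_assoc[OF ksg k(1) phi] .
  hence Pphi: "cmp P phi = zer X Y" using k(2) cmp_zer_r[OF ksg] by simp
  have "cmp Q phi = add (cmp (idm X) phi) (cmp (neg P) phi)" unfolding Q_def
    using cmp_add_left[OF idm_closed nP phi] .
  hence Qphi: "cmp Q phi = phi" using idm_left[OF phi] cmp_neg_l[OF P phi] Pphi neg_zer add_zer[OF phi] by simp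
  have phipsi: "cmp phi psi \<in> hom X X" using cmp_closed[OF phi psi(1)] .
  define chi where "chi = cmp psi Q"
  have chi: "chi \<in> hom Y X" unfolding chi_def using cmp_closed[OF psi(1) Q] .
  have phichi: "cmp phi chi = cmp (cmp phi psi) Q" unfolding chi_def using cmp_assoc[OF phi psi(1) Q] by simp
  have "cmp (cmp phi chi) phi = cmp (cmp phi psi) (cmp Q phi)" unfolding phichi using cmp_assoc[OF phipsi Q phi] .
  hence one: "cmp (cmp phi chi) phi = phi" using Qphi psi(2) by simp
  have m: "cmp k (star k) \<in> hom K K" using cmp_closed[OF k(1) ks] .
  have "cmp k P = cmp (cmp k (cmp (star k) g)) k" unfolding P_def using cmp_assoc[OF k(1) ksg k(1)] by simp
  also have "\<dots> = cmp (cmp (cmp k (star k)) g) k" using cmp_assoc[OF k(1) ks g(1)] by simp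
  also have "\<dots> = k" using g(2) idm_left[OF k(1)] by simp
  finally have kP: "cmp k P = k" .
  have "cmp k Q = add (cmp k (idm X)) (cmp k (neg P))" unfolding Q_def using cmp_add_right[OF k(1) idm_closed nP] .
  hence kQ: "cmp k Q = zer K X" using idm_right[OF k(1)] cmp_neg_r[OF k(1) P] kP add_neg[OF k(1)] by simp
  have nE: "neg (cmp phi psi) \<in> hom X X" using neg_closed[OF phipsi] .
  define R where "R = add (idm X) (neg (cmp phi psi))"
  have R: "R \<in> hom X X" unfolding R_def using add_closed[OF idm_closed nE] .
  have "cmp R phi = add (cmp (idm X) phi) (cmp (neg (cmp phi psi)) phi)" unfolding R_def
    using cmp_add_left[OF idm_closed nE phi] .
  hence Rphi: "cmp R phi = zer X Y" using idm_left[OF phi] cmp_neg_l[OF phipsi phi] psi(2) add_neg[OF phi] by simp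
  obtain r where r: "r \<in> hom X K" "R = cmp r k" using ker_factor[OF ker R Rphi] by blast
  have "cmp R Q = cmp r (cmp k Q)" using r cmp_assoc[OF r(1) k(1) Q] by simp
  hence RQ: "cmp R Q = zer X X" using kQ cmp_zer_r[OF r(1)] by simp
  have "cmp R Q = add (cmp (idm X) Q) (cmp (neg (cmp phi psi)) Q)" unfolding R_def
    using cmp_add_left[OF idm_closed nE Q] .
  hence "add Q (neg (cmp (cmp phi psi) Q)) = zer X X" using RQ idm_left[OF Q] cmp_neg_l[OF phipsi Q] by simp
  hence QE: "Q = cmp phi chi" using diff_zero[OF Q cmp_closed[OF phipsi Q]] phichi by simp
  have ms: "star (cmp k (star k)) = cmp k (star k)" using inv_cmp[OF k(1) ks] inv_inv[OF k(1)] by simp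
  have sg: "star g \<in> hom K K" using inv_closed[OF g(1)] .
  have "star (cmp (cmp k (star k)) g) = cmp (star g) (star (cmp k (star k)))" using inv_cmp[OF m g(1)] .
  hence sgm: "cmp (star g) (cmp k (star k)) = idm K" using ms g(2) star_idm by simp
  have "star g = cmp (star g) (cmp (cmp k (star k)) g)" using g(2) idm_right[OF sg] by simp
  also have "\<dots> = cmp (cmp (star g) (cmp k (star k))) g" using cmp_assoc[OF sg m g(1)] by simp
  also have "\<dots> = g" using sgm idm_left[OF g(1)] by simp
  finally have gs: "star g = g" .
  have "star P = cmp (star k) (star (cmp (star k) g))" unfolding P_def using inv_cmp[OF ksg k(1)] .
  also have "\<dots> = cmp (star k) (cmp g k)" using inv_cmp[OF ks g(1)] inv_inv[OF k(1)] gs by simp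
  also have "\<dots> = P" unfolding P_def using cmp_assoc[OF ks g(1) k(1)] by simp
  finally have Ps: "star P = P" .
  have Qs: "star Q = Q" unfolding Q_def using inv_add[OF idm_closed nP] star_idm star_neg[OF P] Ps by simp
  show ?thesis unfolding inverse13_def using chi one QE Qs unfolding chi_def Q_def P_def by simp
qed

lemma necess:
  assumes phi: "phi \<in> hom X Y" and ker: "is_kernel hom cmp zer phi X Y k K"
    and inv: "inverse13 hom cmp star phi X Y chi"
  shows "invertible_mor hom cmp idm (cmp k (star k)) K K"
proof -
  have k: "k \<in> hom K X" "cmp k phi = zer K Y" using ker unfolding is_kernel_def by auto
  have ks: "star k \<in> hom X K" using inv_closed[OF k(1)] .
  have chi: "chi \<in> hom Y X" "cmp (cmp phi chi) phi = phi" "star (cmp phi chi) = cmp phi chi"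
    using inv unfolding inverse13_def by auto
  define E where "E = cmp phi chi"
  have E: "E \<in> hom X X" unfolding E_def using cmp_closed[OF phi chi(1)] .
  have nE: "neg E \<in> hom X X" using neg_closed[OF E] .
  define R where "R = add (idm X) (neg E)"
  have R: "R \<in> hom X X" unfolding R_def using add_closed[OF idm_closed nE] .
  have "cmp R phi = add (cmp (idm X) phi) (cmp (neg E) phi)" unfolding R_def
    using cmp_add_left[OF idm_closed nE phi] .
  hence Rphi: "cmp R phi = zer X Y" using idm_left[OF phi] cmp_neg_l[OF E phi] chi(2) add_neg[OF phi]
    unfolding E_def by simp
  obtain r where r: "r \<in> hom X K" "R = cmp r k" using ker_factor[OF ker R Rphi] by blast
  have rs: "star r \<in> hom K X" using inv_closed[OF r(1)] .
  have "cmp k E = cmp (cmp k phi) chi" unfolding E_def using cmp_assoc[OF k(1) phi chi(1)] by simp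
  hence kE: "cmp k E = zer K X" using k(2) cmp_zer_l[OF chi(1)] by simp
  have "cmp k R = add (cmp k (idm X)) (cmp k (neg E))" unfolding R_def using cmp_add_right[OF k(1) idm_closed nE] .
  hence kR: "cmp k R = k" using idm_right[OF k(1)] cmp_neg_r[OF k(1) E] kE neg_zer add_zer[OF k(1)] by simp
  have "cmp (cmp k r) k = cmp (idm K) k" using kR r cmp_assoc[OF k(1) r(1) k(1)] idm_left[OF k(1)] by simp
  hence kr: "cmp k r = idm K" using ker_mono[OF ker phi cmp_closed[OF k(1) r(1)] idm_closed] by simp
  have Rs: "star R = R" unfolding R_def using inv_add[OF idm_closed nE] star_idm star_neg[OF E] chi(3)
    unfolding E_def by simp
  have rk: "cmp r k = cmp (star k) (star r)" using Rs r inv_cmp[OF r(1) k(1)] by simp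
  have skr: "cmp (star r) (star k) = idm K" using inv_cmp[OF k(1) r(1)] kr star_idm by simp
  have "cmp (cmp k (star k)) (cmp (star r) r) = cmp k (cmp (star k) (cmp (star r) r))"
    using cmp_assoc[OF k(1) ks cmp_closed[OF rs r(1)]] .
  also have "\<dots> = cmp k (cmp (cmp (star k) (star r)) r)" using cmp_assoc[OF ks rs r(1)] by simp
  also have "\<dots> = cmp (cmp k (cmp r k)) r" using rk cmp_assoc[OF k(1) cmp_closed[OF r(1) k(1)] r(1)] by simp
  also have "\<dots> = cmp (cmp (cmp k r) k) r" using cmp_assoc[OF k(1) r(1) k(1)] by simp
  also have "\<dots> = idm K" using kr idm_left[OF k(1)] by simp
  finally have h1: "cmp (cmp k (star k)) (cmp (star r) r) = idm K" .
  have "cmp (cmp (star r) r) (cmp k (star k)) = cmp (star r) (cmp r (cmp k (star k)))"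
    using cmp_assoc[OF rs r(1) cmp_closed[OF k(1) ks]] .
  also have "\<dots> = cmp (star r) (cmp (cmp r k) (star k))" using cmp_assoc[OF r(1) k(1) ks] by simp
  also have "\<dots> = cmp (star r) (cmp (star k) (cmp (star r) (star k)))"
    using rk cmp_assoc[OF ks rs ks] by simp
  also have "\<dots> = idm K" using skr idm_right[OF ks] by simp
  finally have h2: "cmp (cmp (star r) r) (cmp k (star k)) = idm K" .
  have "cmp (star r) r \<in> hom K K" using cmp_closed[OF rs r(1)] .
  thus ?thesis unfolding invertible_mor_def using h1 h2 by blast
qed
end
theorem lemma3p1:
  fixes hom :: "'o \<Rightarrow> 'o \<Rightarrow> 'm set"
  assumes C: "additive_inv_cat hom cmp idm zer add neg star"
    and phi: "phi \<in> hom X Y"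
    and ker: "is_kernel hom cmp zer phi X Y kappa K"
  shows "((\<exists>chi. inverse13 hom cmp star phi X Y chi) \<longleftrightarrow>
           (regular_mor hom cmp phi X Y \<and> invertible_mor hom cmp idm (cmp kappa (star kappa)) K K))
       \<and> ((\<exists>chi. inverse13 hom cmp star phi X Y chi) \<longrightarrow>
           (\<forall>psi g. psi \<in> hom Y X \<longrightarrow> cmp (cmp phi psi) phi = phi \<longrightarrow>
              g \<in> hom K K \<longrightarrow> cmp (cmp kappa (star kappa)) g = idm K \<longrightarrow> cmp g (cmp kappa (star kappa)) = idm K \<longrightarrow>
              inverse13 hom cmp star phi X Y
                (cmp psi (add (idm X) (neg (cmp (cmp (star kappa) g) kappa))))))"
proof -
  interpret additive_inv_cat hom cmp idm zer add neg star by (fact C)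
  have A: "(\<exists>chi. inverse13 hom cmp star phi X Y chi) \<Longrightarrow> regular_mor hom cmp phi X Y"
    unfolding inverse13_def regular_mor_def by blast
  have B: "(\<exists>chi. inverse13 hom cmp star phi X Y chi) \<Longrightarrow> invertible_mor hom cmp idm (cmp kappa (star kappa)) K K"
    using necess[OF phi ker] by blast
  have D: "regular_mor hom cmp phi X Y \<Longrightarrow> invertible_mor hom cmp idm (cmp kappa (star kappa)) K K
     \<Longrightarrow> \<exists>chi. inverse13 hom cmp star phi X Y chi"
    unfolding regular_mor_def invertible_mor_def using construct[OF phi ker] by blast
  show ?thesis using A B D construct[OF phi ker] by blast
qed

end
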